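(* Let $n\ge 2$, let $a_1,\dots,a_n$ be distinct real numbers, and let $F(a)=\sum_{k=0}^n A_k a^k=\prod_{i=1}^n(a-a_i)$ (so $A_n=1$). Fix signs $\epsilon_i\in\{\pm1\}$ and real numbers $\xi_1,\dots,\xi_n$, put $\Delta_i=\epsilon_i(a-a_i)$ and $$x(a)=\sum_{i=1}^n\frac{\xi_i}{\sqrt{\Delta_i}},$$ and work on an open interval $I\subset(0,\infty)$ on which all $\Delta_i>0$ and $\dot x=dx/da\neq0$. On $M=I\times\mathbb{R}$ with coordinates $(a,y)$ consider $$H=\Pi^2+a\,P_y^2,\qquad \Pi=\frac{a}{\dot x}\,P_a .$$ Define $$G=\sum_{k=0}^n A_{n-k}H^{n-k}P_y^{2k},\quad Q_1=\sum_{k=1}^n\tilde b_k\,H^{n-k}\,\Pi\,P_y^{2k-1},\quad Q_2=\sum_{k=1}^n\tilde c_k\,H^{n-k}P_y^{2k},$$ where for $k=1,\dots,n$ $$\tilde b_k=(-1)^k\sum_{i=1}^n\frac{\xi_i}{\sqrt{\Delta_i}}\,\sigma^i_{k-1},\qquad \tilde c_k=\frac{(-1)^{k+1}}{2}\Big(\sum_{i=1}^n\frac{\xi_i^2}{\Delta_i}\sigma^i_{k-1}+\sum_{i\neq j}\frac{\xi_i\xi_j}{\sqrt{\Delta_i\Delta_j}}\big(\sigma^{ij}_{k-1}+a\,\sigma^{ij}_{k-2}\big)\Big),$$ and set $$S_1=Q_1+y\,G,\qquad S_2=Q_2+y\,Q_1+\frac{y^2}{2}G .$$ Then $\{H,P_y\}=\{H,S_1\}=\{H,S_2\}=0$,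 and each of the triples $(H,P_y,S_1)$ and $(H,P_y,S_2)$ is functionally independent (i.e. $dH\wedge dP_y\wedge dS_1$ and $dH\wedge dP_y\wedge dS_2$ do not vanish identically). Thus $\{H,P_y,S_1\}$ and $\{H,P_y,S_2\}$ are two maximally superintegrable systems.
   Context: $\{\cdot,\cdot\}$ is the canonical Poisson bracket on $T^*M$, $(P_a,P_y)$ being the momenta conjugate to $(a,y)$; $H$ is the geodesic Hamiltonian of the metric $g=\dot x^2a^{-2}da^2+a^{-1}dy^2$. The symmetric functions of the roots are defined as follows: $\sigma_k$ ($0\le k\le n$) by $\prod_{i=1}^n(a-a_i)=\sum_{k=0}^n(-1)^k\sigma_k a^{n-k}$; for each $i$, $\sigma^i_m$ ($-1\le m\le n$) by $\prod_{l\neq i}(a-a_l)=\sum_{m=0}^{n-1}(-1)^m\sigma^i_m a^{n-1-m}$ together with $\sigma^i_{-1}=\sigma^i_n=0$; for $i\neq j$, $\sigma^{ij}_m$ ($-2\le m\le n$) by $\prod_{l\neq i,j}(a-a_l)=\sum_{m=0}^{n-2}(-1)^m\sigma^{ij}_m a^{n-2-m}$ together with $\sigma^{ij}_{-2}=\sigma^{ij}_{-1}=\sigma^{ij}_{n-1}=\sigma^{ij}_n=0$. *)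

theory Defs
  imports "HOL-Analysis.Analysis" "HOL-Computational_Algebra.Polynomial"
begin

text \<open>Phase-space functions on T*M, M = I x R, in canonical coordinates
  (a, y, P_a, P_y), written as curried functions of these four reals.\<close>

type_synonym phasefun = "real \<Rightarrow> real \<Rightarrow> real \<Rightarrow> real \<Rightarrow> real"

definition pd :: "nat \<Rightarrow> phasefun \<Rightarrow> phasefun" where
  "pd m f a y p q =
     (if m = 0 then deriv (\<lambda>t. f t y p q) a
      else if m = 1 then deriv (\<lambda>t. f a t p q) y
      else if m = 2 then deriv (\<lambda>t. f a y t q) p
      else deriv (\<lambda>t. f a y p t) q)"

definition poisson :: "phasefun \<Rightarrow> phasefun \<Rightarrow> phasefun" where
  "poisson f g a y p q =
     pd 0 f a y p q * pd 2 g a y p q - pd 2 f a y p q * pd 0 g a y p q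
   + pd 1 f a y p q * pd 3 g a y p q - pd 3 f a y p q * pd 1 g a y p q"

text \<open>The component of df /\ dg /\ dh along dz_i /\ dz_j /\ dz_k (3x3 minor).\<close>
definition wedge3_comp :: "phasefun \<Rightarrow> phasefun \<Rightarrow> phasefun \<Rightarrow> nat \<Rightarrow> nat \<Rightarrow> nat \<Rightarrow> phasefun" where
  "wedge3_comp f g h i j k a y p q =
     (let F = (\<lambda>m. pd m f a y p q); G = (\<lambda>m. pd m g a y p q); K = (\<lambda>m. pd m h a y p q)
      in F i * (G j * K k - G k * K j) - F j * (G i * K k - G k * K i)
         + F k * (G i * K j - G j * K i))"

definition wedge3_nonzero :: "phasefun \<Rightarrow> phasefun \<Rightarrow> phasefun \<Rightarrow> real \<Rightarrow> real \<Rightarrow> real \<Rightarrow> real \<Rightarrow> bool" where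
  "wedge3_nonzero f g h a y p q \<longleftrightarrow>
     (\<exists>i j k. i < j \<and> j < k \<and> k < 4 \<and> wedge3_comp f g h i j k a y p q \<noteq> 0)"

text \<open>Elementary symmetric functions of the numbers r l, l in S, indexed by
  an integer m, defined through the product expansion
  prod_{l in S} (X - r l) = sum_m (-1)^m e_m X^(card S - m), and 0 for m < 0 or m > card S.\<close>
definition esym :: "(nat \<Rightarrow> real) \<Rightarrow> nat set \<Rightarrow> int \<Rightarrow> real" where
  "esym r S m =
     (if 0 \<le> m \<and> nat m \<le> card S
      then (-1) ^ nat m * coeff (\<Prod>l\<in>S. [:- r l, 1:]) (card S - nat m)
      else 0)"

abbreviation sig1 :: "nat \<Rightarrow> (nat \<Rightarrow> real) \<Rightarrow> nat \<Rightarrow> int \<Rightarrow> real" where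
  "sig1 n r i m \<equiv> esym r ({1..n} - {i}) m"

abbreviation sig2 :: "nat \<Rightarrow> (nat \<Rightarrow> real) \<Rightarrow> nat \<Rightarrow> nat \<Rightarrow> int \<Rightarrow> real" where
  "sig2 n r i j m \<equiv> esym r ({1..n} - {i, j}) m"

definition Acoef :: "nat \<Rightarrow> (nat \<Rightarrow> real) \<Rightarrow> nat \<Rightarrow> real" where
  "Acoef n r k = coeff (\<Prod>i\<in>{1..n}. [:- r i, 1:]) k"

definition Delta :: "(nat \<Rightarrow> real) \<Rightarrow> (nat \<Rightarrow> real) \<Rightarrow> nat \<Rightarrow> real \<Rightarrow> real" where
  "Delta eps r i a = eps i * (a - r i)"

definition xfun :: "nat \<Rightarrow> (nat \<Rightarrow> real) \<Rightarrow> (nat \<Rightarrow> real) \<Rightarrow> (nat \<Rightarrow> real) \<Rightarrow> real \<Rightarrow> real" where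
  "xfun n eps r xi a = (\<Sum>i\<in>{1..n}. xi i / sqrt (Delta eps r i a))"

definition xdot :: "nat \<Rightarrow> (nat \<Rightarrow> real) \<Rightarrow> (nat \<Rightarrow> real) \<Rightarrow> (nat \<Rightarrow> real) \<Rightarrow> real \<Rightarrow> real" where
  "xdot n eps r xi a = deriv (xfun n eps r xi) a"

definition PiF :: "nat \<Rightarrow> (nat \<Rightarrow> real) \<Rightarrow> (nat \<Rightarrow> real) \<Rightarrow> (nat \<Rightarrow> real) \<Rightarrow> phasefun" where
  "PiF n eps r xi a y p q = a / xdot n eps r xi a * p"

definition Ham :: "nat \<Rightarrow> (nat \<Rightarrow> real) \<Rightarrow> (nat \<Rightarrow> real) \<Rightarrow> (nat \<Rightarrow> real) \<Rightarrow> phasefun" where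
  "Ham n eps r xi a y p q = (PiF n eps r xi a y p q)\<^sup>2 + a * q\<^sup>2"

definition PyF :: phasefun where
  "PyF a y p q = q"

definition btil :: "nat \<Rightarrow> (nat \<Rightarrow> real) \<Rightarrow> (nat \<Rightarrow> real) \<Rightarrow> (nat \<Rightarrow> real) \<Rightarrow> nat \<Rightarrow> real \<Rightarrow> real" where
  "btil n eps r xi k a =
     (-1) ^ k * (\<Sum>i\<in>{1..n}. xi i / sqrt (Delta eps r i a) * sig1 n r i (int k - 1))"

definition ctil :: "nat \<Rightarrow> (nat \<Rightarrow> real) \<Rightarrow> (nat \<Rightarrow> real) \<Rightarrow> (nat \<Rightarrow> real) \<Rightarrow> nat \<Rightarrow> real \<Rightarrow> real" where
  "ctil n eps r xi k a =
     (-1) ^ (k + 1) / 2 *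
       ((\<Sum>i\<in>{1..n}. (xi i)\<^sup>2 / Delta eps r i a * sig1 n r i (int k - 1))
      + (\<Sum>i\<in>{1..n}. \<Sum>j\<in>{1..n} - {i}.
           xi i * xi j / sqrt (Delta eps r i a * Delta eps r j a)
           * (sig2 n r i j (int k - 1) + a * sig2 n r i j (int k - 2))))"

definition Gfun :: "nat \<Rightarrow> (nat \<Rightarrow> real) \<Rightarrow> (nat \<Rightarrow> real) \<Rightarrow> (nat \<Rightarrow> real) \<Rightarrow> phasefun" where
  "Gfun n eps r xi a y p q =
     (\<Sum>k\<in>{0..n}. Acoef n r (n - k) * (Ham n eps r xi a y p q) ^ (n - k) * q ^ (2 * k))"

definition Q1fun :: "nat \<Rightarrow> (nat \<Rightarrow> real) \<Rightarrow> (nat \<Rightarrow> real) \<Rightarrow> (nat \<Rightarrow> real) \<Rightarrow> phasefun" where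
  "Q1fun n eps r xi a y p q =
     (\<Sum>k\<in>{1..n}. btil n eps r xi k a * (Ham n eps r xi a y p q) ^ (n - k)
        * PiF n eps r xi a y p q * q ^ (2 * k - 1))"

definition Q2fun :: "nat \<Rightarrow> (nat \<Rightarrow> real) \<Rightarrow> (nat \<Rightarrow> real) \<Rightarrow> (nat \<Rightarrow> real) \<Rightarrow> phasefun" where
  "Q2fun n eps r xi a y p q =
     (\<Sum>k\<in>{1..n}. ctil n eps r xi k a * (Ham n eps r xi a y p q) ^ (n - k) * q ^ (2 * k))"

definition S1fun :: "nat \<Rightarrow> (nat \<Rightarrow> real) \<Rightarrow> (nat \<Rightarrow> real) \<Rightarrow> (nat \<Rightarrow> real) \<Rightarrow> phasefun" where
  "S1fun n eps r xi a y p q = Q1fun n eps r xi a y p q + y * Gfun n eps r xi a y p q"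

definition S2fun :: "nat \<Rightarrow> (nat \<Rightarrow> real) \<Rightarrow> (nat \<Rightarrow> real) \<Rightarrow> (nat \<Rightarrow> real) \<Rightarrow> phasefun" where
  "S2fun n eps r xi a y p q =
     Q2fun n eps r xi a y p q + y * Q1fun n eps r xi a y p q + y\<^sup>2 / 2 * Gfun n eps r xi a y p q"

end

theory Submission
  imports Defs
begin


lemma coeff_lin_mult:
  "coeff ([:- c, 1:] * (P::real poly)) k = - c * coeff P k + (if k = 0 then 0 else coeff P (k - 1))"
  by (simp add: coeff_pCons')

lemma prod_lin_coeff_zero:
  assumes "finite S" "k > card S"
  shows "coeff (\<Prod>l\<in>S. [:- r l, 1:]) k = (0::real)"
proof -
  have "degree (\<Prod>l\<in>S. [:- r l, 1::real:]) \<le> card S"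
    by (rule order_trans[OF degree_prod_sum_le[OF assms(1)]]) simp
  then show ?thesis using assms(2) by (intro coeff_eq_0) simp
qed

lemma prod_lin_lead:
  assumes "finite S"
  shows "coeff (\<Prod>l\<in>S. [:- r l, 1:]) (card S) = (1::real)"
  using assms
proof (induction S rule: finite_induct)
  case empty then show ?case by simp
next
  case (insert x F)
  have "coeff (\<Prod>l\<in>insert x F. [:- r l, 1:]) (card (insert x F))
     = coeff ([:- r x, 1:] * (\<Prod>l\<in>F. [:- r l, 1:])) (Suc (card F))"
    using insert by simp
  also have "\<dots> = 1" unfolding coeff_lin_mult
    using insert prod_lin_coeff_zero[of F "Suc (card F)" r] by simp
  finally show ?case .
qed

lemma esym_remove:
  assumes "finite S" "i \<in> S"
  shows "esym r S m = esym r (S - {i}) m + r i * esym r (S - {i}) (m - 1)"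
proof -
  define S' where "S' = S - {i}"
  define N where "N = card S'"
  have fS': "finite S'" using assms S'_def by simp
  have cS: "card S = Suc N" using assms unfolding N_def S'_def
    using card_Suc_Diff1[OF assms] by simp
  have P: "(\<Prod>l\<in>S. [:- r l, 1:]) = [:- r i, 1:] * (\<Prod>l\<in>S'. [:- r l, 1:])"
    unfolding S'_def using assms by (simp add: prod.remove)
  define P' where "P' = (\<Prod>l\<in>S'. [:- r l, 1:])"
  have z: "\<And>k. k > N \<Longrightarrow> coeff P' k = 0"
    unfolding P'_def N_def using prod_lin_coeff_zero[OF fS'] by blast
  show ?thesis
  proof (cases "m < 0")
    case True then show ?thesis by (simp add: esym_def)
  next
    case False
    then obtain k where mk: "m = int k" by (metis nonneg_int_cases not_less)
    show ?thesis
    proof (cases k)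
      case 0
      then show ?thesis unfolding esym_def S'_def[symmetric] N_def[symmetric] cS P P'_def[symmetric]
        using mk z[of "Suc N"] by (simp add: coeff_lin_mult)
    next
      case (Suc k')
      show ?thesis
      proof (cases "k \<le> N")
        case True
        then show ?thesis
        proof -
          have e1: "nat (1 + int k') = Suc k'" by simp
          have e2: "Suc (N - Suc k') = N - k'" using True Suc by simp
          show ?thesis using True mk Suc unfolding esym_def S'_def[symmetric] N_def[symmetric] cS P P'_def[symmetric]
            by (simp add: coeff_lin_mult e1 e2 algebra_simps coeff_pCons')
        qed
      next
        case False
        show ?thesis
        proof (cases "k = Suc N")
          case True
          then show ?thesis unfolding esym_def S'_def[symmetric] N_def[symmetric] cS P P'_def[symmetric]
            using mk Suc by (simp add: coeff_lin_mult nat_add_distrib)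
        next
          case False2: False
          then show ?thesis unfolding esym_def S'_def[symmetric] N_def[symmetric] cS P P'_def[symmetric]
            using mk Suc False by auto
        qed
      qed
    qed
  qed
qed




lemma d_invsqrt:
  assumes e: "eps i = 1 \<or> eps i = -1" and D: "Delta eps r i t > 0"
  shows "((\<lambda>s. c / sqrt (Delta eps r i s)) has_real_derivative
           - (c / sqrt (Delta eps r i t)) / (2 * (t - r i))) (at t)"
proof -
  have h1: "((\<lambda>s. Delta eps r i s) has_real_derivative eps i) (at t)"
    unfolding Delta_def by (auto intro!: derivative_eq_intros)
  have h2: "((\<lambda>s. sqrt (Delta eps r i s)) has_real_derivative inverse (sqrt (Delta eps r i t)) / 2 * eps i) (at t)"
    by (rule DERIV_chain2[OF DERIV_real_sqrt[OF D] h1])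
  have h3: "((\<lambda>s. c / sqrt (Delta eps r i s)) has_real_derivative
     - (c * (inverse (sqrt (Delta eps r i t)) / 2 * eps i)) / (sqrt (Delta eps r i t))^2) (at t)"
    using DERIV_divide[OF DERIV_const h2, of c] D by (simp add: power2_eq_square)
  have "- (c * (inverse (sqrt (Delta eps r i t)) / 2 * eps i)) / (sqrt (Delta eps r i t))^2
      = - (c / sqrt (Delta eps r i t)) / (2 * (t - r i))"
    using D e unfolding Delta_def by (elim disjE) (auto simp: field_simps)
  with h3 show ?thesis by simp
qed

lemma d_inv:
  assumes e: "eps i = 1 \<or> eps i = -1" and D: "Delta eps r i t > 0"
  shows "((\<lambda>s. c / Delta eps r i s) has_real_derivative
           - (c / Delta eps r i t) / (t - r i)) (at t)"
proof -
  have h1: "((\<lambda>s. Delta eps r i s) has_real_derivative eps i) (at t)"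
    unfolding Delta_def by (auto intro!: derivative_eq_intros)
  have h3: "((\<lambda>s. c / Delta eps r i s) has_real_derivative
     - (c * eps i) / (Delta eps r i t)^2) (at t)"
    using DERIV_divide[OF DERIV_const h1, of c] D by (simp add: power2_eq_square)
  have "- (c * eps i) / (Delta eps r i t)^2 = - (c / Delta eps r i t) / (t - r i)"
  proof -
    have d0: "t - r i \<noteq> 0" using D unfolding Delta_def by auto
    have sq: "(Delta eps r i t)^2 = (t - r i)^2" using e unfolding Delta_def
      by (elim disjE) (simp_all add: power2_eq_square algebra_simps)
    have "- (c * eps i) / (t - r i)^2 = - (c / Delta eps r i t) / (t - r i)"
      using e
    proof (elim disjE)
      assume "eps i = 1" then show ?thesis by (simp add: power2_eq_square divide_divide_eq_left Delta_def)
    next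
      assume m: "eps i = -1"
      have "(r i - t) * (t - r i) = - ((t - r i)*(t - r i))" by algebra
      then show ?thesis using m by (simp add: power2_eq_square divide_divide_eq_left Delta_def)
    qed
    then show ?thesis using sq by simp
  qed
  with h3 show ?thesis by simp
qed




lemma d_pair:
  assumes ei: "eps i = 1 \<or> eps i = -1" and Di: "Delta eps r i t > 0"
      and ej: "eps j = 1 \<or> eps j = -1" and Dj: "Delta eps r j t > 0"
  shows "((\<lambda>s. c / sqrt (Delta eps r i s * Delta eps r j s) * (\<alpha> + s * \<beta>)) has_real_derivative
     (- (c / sqrt (Delta eps r i t * Delta eps r j t) / (2 * (t - r i))
         + c / sqrt (Delta eps r i t * Delta eps r j t) / (2 * (t - r j))) * (\<alpha> + t * \<beta>)
      + c / sqrt (Delta eps r i t * Delta eps r j t) * \<beta>)) (at t)"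
proof -
  have eq: "(\<lambda>s. c / sqrt (Delta eps r i s * Delta eps r j s) * (\<alpha> + s * \<beta>))
     = (\<lambda>s. (c / sqrt (Delta eps r i s)) * (1 / sqrt (Delta eps r j s)) * (\<alpha> + s * \<beta>))"
    by (simp add: real_sqrt_mult)
  have h: "((\<lambda>s. (c / sqrt (Delta eps r i s)) * (1 / sqrt (Delta eps r j s)) * (\<alpha> + s * \<beta>)) has_real_derivative
     ((- (c / sqrt (Delta eps r i t)) / (2 * (t - r i))) * (1 / sqrt (Delta eps r j t))
      + (c / sqrt (Delta eps r i t)) * (- (1 / sqrt (Delta eps r j t)) / (2 * (t - r j)))) * (\<alpha> + t * \<beta>)
      + (c / sqrt (Delta eps r i t)) * (1 / sqrt (Delta eps r j t)) * \<beta>) (at t)"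
  proof -
    have lin: "((\<lambda>s. \<alpha> + s * \<beta>) has_real_derivative \<beta>) (at t)"
      by (auto intro!: derivative_eq_intros)
    show ?thesis
      using DERIV_mult[OF DERIV_mult[OF d_invsqrt[OF ei Di, of c] d_invsqrt[OF ej Dj, of 1]] lin]
      by (simp add: algebra_simps)
  qed
  show ?thesis unfolding eq using h by (simp add: real_sqrt_mult algebra_simps)
qed

lemma xfun_deriv:
  assumes e: "\<forall>i\<in>{1..n}. eps i = 1 \<or> eps i = -1" and D: "\<forall>i\<in>{1..n}. Delta eps r i t > 0"
  shows "(xfun n eps r xi has_real_derivative
     (\<Sum>i\<in>{1..n}. - (xi i / sqrt (Delta eps r i t)) / (2 * (t - r i)))) (at t)"
  unfolding xfun_def[abs_def]
  by (rule DERIV_sum) (use e D d_invsqrt in auto)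

definition xdotE where
  "xdotE n eps r xi s = (\<Sum>i\<in>{1..n}. - (xi i / sqrt (Delta eps r i s)) / (2 * (s - r i)))"

lemma xdot_eq:
  assumes e: "\<forall>i\<in>{1..n}. eps i = 1 \<or> eps i = -1" and D: "\<forall>i\<in>{1..n}. Delta eps r i t > 0"
  shows "xdot n eps r xi t = xdotE n eps r xi t"
  unfolding xdot_def xdotE_def by (rule DERIV_imp_deriv[OF xfun_deriv[OF e D]])

lemma xdotE_diff:
  assumes e: "\<forall>i\<in>{1..n}. eps i = 1 \<or> eps i = -1" and D: "\<forall>i\<in>{1..n}. Delta eps r i t > 0"
  shows "\<exists>d. (xdotE n eps r xi has_real_derivative d) (at t)"
proof -
  have "\<And>i. i \<in> {1..n} \<Longrightarrow> \<exists>d. ((\<lambda>s. - (xi i / sqrt (Delta eps r i s)) / (2 * (s - r i))) has_real_derivative d) (at t)"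
  proof -
    fix i assume i: "i \<in> {1..n}"
    have "t - r i \<noteq> 0" using D i unfolding Delta_def by force
    then show "\<exists>d. ((\<lambda>s. - (xi i / sqrt (Delta eps r i s)) / (2 * (s - r i))) has_real_derivative d) (at t)"
    proof -
      assume d0: "t - r i \<noteq> 0"
      have g: "((\<lambda>s. -1 / (2 * (s - r i))) has_real_derivative 2 / (2 * (t - r i))^2) (at t)"
        using d0 by (auto intro!: derivative_eq_intros simp: power2_eq_square)
      note h = DERIV_mult[OF d_invsqrt[OF e[rule_format, OF i] D[rule_format, OF i], of "xi i"] g]
      have eq: "(\<lambda>s. - (xi i / sqrt (Delta eps r i s)) / (2 * (s - r i)))
          = (\<lambda>s. (xi i / sqrt (Delta eps r i s)) * (-1 / (2 * (s - r i))))" by auto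
      show ?thesis unfolding eq using h by blast
    qed
  qed
  then obtain f where f: "\<And>i. i \<in> {1..n} \<Longrightarrow> ((\<lambda>s. - (xi i / sqrt (Delta eps r i s)) / (2 * (s - r i))) has_real_derivative f i) (at t)"
    by metis
  show ?thesis unfolding xdotE_def[abs_def]
    by (rule exI, rule DERIV_sum, rule f)
qed

lemma xdot_diff:
  assumes e: "\<forall>i\<in>{1..n}. eps i = 1 \<or> eps i = -1" and DI: "\<forall>s\<in>I. \<forall>i\<in>{1..n}. Delta eps r i s > 0"
    and "open I" "t \<in> I"
  shows "\<exists>d. (xdot n eps r xi has_real_derivative d) (at t)"
proof -
  obtain d where d: "(xdotE n eps r xi has_real_derivative d) (at t)"
    using xdotE_diff[OF e] DI assms(4) by blast
  have "(xdot n eps r xi has_real_derivative d) (at t)"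
    by (rule has_field_derivative_transform_within_open[OF d assms(3,4)])
       (use xdot_eq[OF e] DI in auto)
  then show ?thesis by blast
qed




definition dbE where
  "dbE n eps r xi k t = (-1) ^ k * (\<Sum>i\<in>{1..n}. - (xi i / sqrt (Delta eps r i t)) / (2 * (t - r i)) * sig1 n r i (int k - 1))"

lemma btil_deriv:
  assumes e: "\<forall>i\<in>{1..n}. eps i = 1 \<or> eps i = -1" and D: "\<forall>i\<in>{1..n}. Delta eps r i t > 0"
  shows "(btil n eps r xi k has_real_derivative dbE n eps r xi k t) (at t)"
  unfolding btil_def[abs_def] dbE_def
  apply (rule DERIV_cmult)
  apply (rule DERIV_sum)
  apply (rule DERIV_cmult_right)
  apply (rule d_invsqrt) using e D by auto

lemma Acoef_esym:
  assumes "j \<le> n"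
  shows "Acoef n r (n - j) = (-1) ^ j * esym r {1..n} (int j)"
  using assms unfolding Acoef_def esym_def by simp

lemma Acoef_top: "Acoef n r n = 1"
  unfolding Acoef_def using prod_lin_lead[of "{1..n}" r] by simp

lemma sig1_neg: "sig1 n r i (-1) = 0"
  unfolding esym_def by simp

lemma sig1_top: assumes "i \<in> {1..n}" shows "sig1 n r i (int n) = 0"
  using assms unfolding esym_def by auto

lemma Q1coef:
  assumes e: "\<forall>i\<in>{1..n}. eps i = 1 \<or> eps i = -1" and D: "\<forall>i\<in>{1..n}. Delta eps r i t > 0"
    and j: "j \<le> n"
  shows "btil n eps r xi j t + 2 * t * dbE n eps r xi j t - 2 * dbE n eps r xi (Suc j) t
        = 2 * xdotE n eps r xi t * Acoef n r (n - j)"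
proof -
  define v where "v i = xi i / sqrt (Delta eps r i t)" for i
  define d where "d i = t - r i" for i
  define a where "a i = sig1 n r i (int j - 1)" for i
  define b where "b i = sig1 n r i (int j)" for i
  have L: "btil n eps r xi j t + 2 * t * dbE n eps r xi j t - 2 * dbE n eps r xi (Suc j) t
     = (\<Sum>i\<in>{1..n}. (-1)^j * (v i * a i) + 2 * t * ((-1)^j * (- v i / (2 * d i) * a i))
          - 2 * ((-1)^Suc j * (- v i / (2 * d i) * b i)))"
    unfolding btil_def dbE_def v_def d_def a_def b_def
    by (simp add: sum.distrib sum_subtractf sum_distrib_left sum_negf)
  have R: "2 * xdotE n eps r xi t * Acoef n r (n - j)
     = (\<Sum>i\<in>{1..n}. 2 * (- v i / (2 * d i)) * ((-1)^j * (b i + r i * a i)))"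
  proof -
    have "\<And>i. i \<in> {1..n} \<Longrightarrow> Acoef n r (n - j) = (-1)^j * (b i + r i * a i)"
      unfolding Acoef_esym[OF j] a_def b_def
      using esym_remove[of "{1..n}" _ r "int j"] by simp
    then have "2 * xdotE n eps r xi t * Acoef n r (n - j)
       = (\<Sum>i\<in>{1..n}. 2 * (- v i / (2 * d i)) * Acoef n r (n - j))"
      unfolding xdotE_def v_def d_def by (simp add: sum_distrib_left sum_distrib_right)
    also have "\<dots> = (\<Sum>i\<in>{1..n}. 2 * (- v i / (2 * d i)) * ((-1)^j * (b i + r i * a i)))"
      using \<open>\<And>i. i \<in> {1..n} \<Longrightarrow> _\<close> by (intro sum.cong) auto
    finally show ?thesis .
  qed
  show ?thesis unfolding L R
  proof (intro sum.cong refl)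
    fix i assume i: "i \<in> {1..n}"
    have "d i \<noteq> 0" using D i unfolding d_def Delta_def by force
    then show "(-1)^j * (v i * a i) + 2 * t * ((-1)^j * (- v i / (2 * d i) * a i))
          - 2 * ((-1)^Suc j * (- v i / (2 * d i) * b i))
        = 2 * (- v i / (2 * d i)) * ((-1)^j * (b i + r i * a i))"
    proof -
      have ri: "r i = t - d i" by (simp add: d_def)
      show ?thesis unfolding ri using \<open>d i \<noteq> 0\<close> by (simp add: field_simps)
    qed
  qed
qed




definition dcE where
  "dcE n eps r xi k t = (-1) ^ (k + 1) / 2 *
     ((\<Sum>i\<in>{1..n}. - ((xi i)\<^sup>2 / Delta eps r i t) / (t - r i) * sig1 n r i (int k - 1))
    + (\<Sum>i\<in>{1..n}. \<Sum>j\<in>{1..n} - {i}.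
         (- (xi i * xi j / sqrt (Delta eps r i t * Delta eps r j t) / (2 * (t - r i))
             + xi i * xi j / sqrt (Delta eps r i t * Delta eps r j t) / (2 * (t - r j)))
           * (sig2 n r i j (int k - 1) + t * sig2 n r i j (int k - 2))
         + xi i * xi j / sqrt (Delta eps r i t * Delta eps r j t) * sig2 n r i j (int k - 2))))"

lemma ctil_deriv:
  assumes e: "\<forall>i\<in>{1..n}. eps i = 1 \<or> eps i = -1" and D: "\<forall>i\<in>{1..n}. Delta eps r i t > 0"
  shows "(ctil n eps r xi k has_real_derivative dcE n eps r xi k t) (at t)"
  unfolding ctil_def[abs_def] dcE_def
  apply (rule DERIV_cmult)
  apply (rule DERIV_add)
   apply (rule DERIV_sum)
   apply (rule DERIV_cmult_right)
   apply (rule d_inv) using e D apply auto[2]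
  apply (rule DERIV_sum)
  apply (rule DERIV_sum)
  apply (rule d_pair) using e D by auto

lemma sum_offdiag_swap:
  assumes "finite S"
  shows "(\<Sum>i\<in>S. \<Sum>j\<in>S - {i}. F i j) = (\<Sum>i\<in>S. \<Sum>j\<in>S - {i}. F j i)"
proof -
  have "(\<Sum>i\<in>S. \<Sum>j\<in>{j. j \<in> S \<and> i \<noteq> j}. F i j) = (\<Sum>j\<in>S. \<Sum>i\<in>{i. i \<in> S \<and> i \<noteq> j}. F i j)"
    by (rule sum.swap_restrict[OF assms assms])
  moreover have "\<And>i. {j. j \<in> S \<and> i \<noteq> j} = S - {i}" "\<And>j. {i. i \<in> S \<and> i \<noteq> j} = S - {j}" by auto
  ultimately show ?thesis by simp
qed

lemma Q2coef:
  assumes e: "\<forall>i\<in>{1..n}. eps i = 1 \<or> eps i = -1" and D: "\<forall>i\<in>{1..n}. Delta eps r i t > 0"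
  shows "dcE n eps r xi k t = - xdotE n eps r xi t * btil n eps r xi k t"
proof -
  define v where "v i = xi i / sqrt (Delta eps r i t)" for i
  define d where "d i = t - r i" for i
  define s1 where "s1 i = sig1 n r i (int k - 1)" for i
  define \<alpha> where "\<alpha> i j = sig2 n r i j (int k - 1)" for i j
  define \<beta> where "\<beta> i j = sig2 n r i j (int k - 2)" for i j
  define P where "P i j = - (v i * v j / (2 * d i) + v i * v j / (2 * d j)) * (\<alpha> i j + t * \<beta> i j)
        + v i * v j * \<beta> i j" for i j
  define S where "S = {1..n::nat}"
  have fS: "finite S" by (simp add: S_def)
  have dnz: "\<And>i. i \<in> S \<Longrightarrow> d i \<noteq> 0" using D unfolding d_def Delta_def S_def by force
  have vv: "\<And>i. i \<in> S \<Longrightarrow> (xi i)\<^sup>2 / Delta eps r i t = v i * v i"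
  proof -
    fix i assume "i \<in> S"
    then have "Delta eps r i t > 0" using D S_def by auto
    then show "(xi i)\<^sup>2 / Delta eps r i t = v i * v i"
      unfolding v_def by (simp add: power2_eq_square[symmetric] power_divide)
  qed
  have vij: "\<And>i j. xi i * xi j / sqrt (Delta eps r i t * Delta eps r j t) = v i * v j"
    unfolding v_def by (simp add: real_sqrt_mult)
  have L: "dcE n eps r xi k t = (-1) ^ (k + 1) / 2 *
     ((\<Sum>i\<in>S. - (v i * v i) / d i * s1 i) + (\<Sum>i\<in>S. \<Sum>j\<in>S - {i}. P i j))"
    unfolding dcE_def vij P_def s1_def \<alpha>_def \<beta>_def d_def[symmetric] S_def[symmetric]
    using vv by (simp add: d_def)
  have R0: "- xdotE n eps r xi t * btil n eps r xi k t
      = (-1)^k * (\<Sum>i\<in>S. \<Sum>j\<in>S. v i * v j / (2 * d j) * s1 i)"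
  proof -
    have x: "xdotE n eps r xi t = - (\<Sum>j\<in>S. v j / (2 * d j))"
      unfolding xdotE_def v_def d_def S_def by (simp add: sum_negf)
    have b: "btil n eps r xi k t = (-1)^k * (\<Sum>i\<in>S. v i * s1 i)"
      unfolding btil_def v_def s1_def S_def by simp
    have "(\<Sum>j\<in>S. v j / (2 * d j)) * (\<Sum>i\<in>S. v i * s1 i)
        = (\<Sum>i\<in>S. \<Sum>j\<in>S. v i * s1 i * (v j / (2 * d j)))"
      by (subst mult.commute) (rule sum_product)
    also have "\<dots> = (\<Sum>i\<in>S. \<Sum>j\<in>S. v i * v j / (2 * d j) * s1 i)"
      by (simp add: algebra_simps)
    finally show ?thesis unfolding x b by simp
  qed
  have R1: "(\<Sum>i\<in>S. \<Sum>j\<in>S. v i * v j / (2 * d j) * s1 i)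
      = (\<Sum>i\<in>S. v i * v i / (2 * d i) * s1 i) + (\<Sum>i\<in>S. \<Sum>j\<in>S - {i}. v i * v j / (2 * d j) * s1 i)"
    by (simp add: sum.distrib[symmetric] sum.remove[OF fS])
  have pair: "P i j = - (v i * v j / (2 * d j) * s1 i + v j * v i / (2 * d i) * s1 j)"
    if i: "i \<in> S" and j: "j \<in> S - {i}" for i j
  proof -
    have e1: "s1 i = \<alpha> i j + r j * \<beta> i j"
      unfolding s1_def \<alpha>_def \<beta>_def
      using esym_remove[of "{1..n} - {i}" j r "int k - 1"] i j
      by (simp add: S_def insert_commute Diff_insert2[symmetric] algebra_simps)
    have e2: "s1 j = \<alpha> i j + r i * \<beta> i j"
      unfolding s1_def \<alpha>_def \<beta>_def
      using esym_remove[of "{1..n} - {j}" i r "int k - 1"] i j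
      by (simp add: S_def insert_commute Diff_insert2[symmetric] algebra_simps)
    have ri: "r i = t - d i" "r j = t - d j" by (simp_all add: d_def)
    show ?thesis unfolding P_def e1 e2 ri using dnz i j by (simp add: field_simps)
  qed
  have off: "(\<Sum>i\<in>S. \<Sum>j\<in>S - {i}. P i j) = - 2 * (\<Sum>i\<in>S. \<Sum>j\<in>S - {i}. v i * v j / (2 * d j) * s1 i)"
  proof -
    have "(\<Sum>i\<in>S. \<Sum>j\<in>S - {i}. P i j)
       = (\<Sum>i\<in>S. \<Sum>j\<in>S - {i}. - (v i * v j / (2 * d j) * s1 i + v j * v i / (2 * d i) * s1 j))"
      using pair by (intro sum.cong refl) auto
    also have "\<dots> = - ((\<Sum>i\<in>S. \<Sum>j\<in>S - {i}. v i * v j / (2 * d j) * s1 i)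
                      + (\<Sum>i\<in>S. \<Sum>j\<in>S - {i}. v j * v i / (2 * d i) * s1 j))"
      by (simp add: sum.distrib sum_negf sum_subtractf)
    also have "(\<Sum>i\<in>S. \<Sum>j\<in>S - {i}. v j * v i / (2 * d i) * s1 j)
        = (\<Sum>i\<in>S. \<Sum>j\<in>S - {i}. v i * v j / (2 * d j) * s1 i)"
      by (rule sum_offdiag_swap[OF fS, symmetric])
    finally show ?thesis by simp
  qed
  have "- xdotE n eps r xi t * btil n eps r xi k t
     = (-1)^k * ((\<Sum>i\<in>S. v i * v i / (2 * d i) * s1 i) + (\<Sum>i\<in>S. \<Sum>j\<in>S - {i}. v i * v j / (2 * d j) * s1 i))"
    using R0 R1 by simp
  moreover have "(\<Sum>i\<in>S. - (v i * v i) / d i * s1 i) = - 2 * (\<Sum>i\<in>S. v i * v i / (2 * d i) * s1 i)"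
    by (simp add: sum_distrib_left sum_negf)
  ultimately show ?thesis unfolding L off by (simp add: algebra_simps)
qed




lemma T1s:
  assumes U: "(U has_real_derivative U') (at t)" and ph: "(\<phi> has_real_derivative \<phi>') (at t)"
  shows "((\<lambda>s. \<phi> s * ((U s * p)^2 + s * q^2) ^ m * (U s * p) * c) has_real_derivative
     (\<phi>' * ((U t * p)^2 + t * q^2) ^ m * (U t * p)
      + \<phi> t * (of_nat m * ((U t * p)^2 + t * q^2) ^ (m - 1) * (2 * (U t * p) * (U' * p) + q^2)) * (U t * p)
      + \<phi> t * ((U t * p)^2 + t * q^2) ^ m * (U' * p)) * c) (at t)"
  by (rule derivative_eq_intros U ph refl | simp)+ (simp add: algebra_simps power2_eq_square)

lemma T1p:
  shows "((\<lambda>p'. \<phi> * ((u * p')^2 + t * q^2) ^ m * (u * p') * c) has_real_derivative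
     (\<phi> * (of_nat m * ((u * p)^2 + t * q^2) ^ (m - 1) * (2 * (u * p) * u)) * (u * p)
      + \<phi> * ((u * p)^2 + t * q^2) ^ m * u) * c) (at p)"
  by (rule derivative_eq_intros refl | simp)+

lemma T0s:
  assumes U: "(U has_real_derivative U') (at t)" and ph: "(\<phi> has_real_derivative \<phi>') (at t)"
  shows "((\<lambda>s. \<phi> s * ((U s * p)^2 + s * q^2) ^ m * c) has_real_derivative
     (\<phi>' * ((U t * p)^2 + t * q^2) ^ m
      + \<phi> t * (of_nat m * ((U t * p)^2 + t * q^2) ^ (m - 1) * (2 * (U t * p) * (U' * p) + q^2))) * c) (at t)"
  by (rule derivative_eq_intros U ph refl | simp)+

lemma T0p:
  shows "((\<lambda>p'. \<phi> * ((u * p')^2 + t * q^2) ^ m * c) has_real_derivative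
     (\<phi> * (of_nat m * ((u * p)^2 + t * q^2) ^ (m - 1) * (2 * (u * p) * u))) * c) (at p)"
  by (rule derivative_eq_intros refl | simp)+




lemma SumQ1:
  fixes b db A :: "nat \<Rightarrow> real"
  assumes b0: "b 0 = 0" and db0: "db 0 = 0" and dbn: "db (Suc n) = 0"
    and C: "\<And>j. j \<le> n \<Longrightarrow> b j + 2*t*db j - 2*db (Suc j) = 2*X*A (n-j)"
  shows "(\<Sum>k\<in>{1..n}. q^(2*k-1) * H^(n-k) * (b k * q^2 - 2*(H - t*q^2)*db k))
       = 2*X*q*(\<Sum>k\<in>{0..n}. A (n-k) * H^(n-k) * q^(2*k))"
proof -
  have R: "2*X*q*(\<Sum>k\<in>{0..n}. A (n-k) * H^(n-k) * q^(2*k))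
      = (\<Sum>k\<in>{0..n}. q * H^(n-k) * q^(2*k) * (b k + 2*t*db k))
        - (\<Sum>k\<in>{0..n}. 2 * q * H^(n-k) * q^(2*k) * db (Suc k))"
  proof -
    have "2*X*q*(\<Sum>k\<in>{0..n}. A (n-k) * H^(n-k) * q^(2*k))
        = (\<Sum>k\<in>{0..n}. q * H^(n-k) * q^(2*k) * (2*X*A (n-k)))"
      by (simp add: sum_distrib_left algebra_simps)
    also have "\<dots> = (\<Sum>k\<in>{0..n}. q * H^(n-k) * q^(2*k) * (b k + 2*t*db k - 2*db (Suc k)))"
      using C by (intro sum.cong) auto
    also have "\<dots> = (\<Sum>k\<in>{0..n}. q * H^(n-k) * q^(2*k) * (b k + 2*t*db k))
        - (\<Sum>k\<in>{0..n}. 2 * q * H^(n-k) * q^(2*k) * db (Suc k))"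
      by (simp add: sum_subtractf[symmetric] algebra_simps)
    finally show ?thesis .
  qed
  show ?thesis
  proof (cases n)
    case 0
    then show ?thesis unfolding R using b0 db0 dbn by simp
  next
    case (Suc m)
    have L: "(\<Sum>k\<in>{1..n}. q^(2*k-1) * H^(n-k) * (b k * q^2 - 2*(H - t*q^2)*db k))
       = (\<Sum>j\<in>{0..m}. q^(2*j+1) * H^(m-j) * (b (Suc j) * q^2 - 2*(H - t*q^2)*db (Suc j)))"
      unfolding Suc One_nat_def sum.shift_bounds_cl_Suc_ivl
      by (intro sum.cong refl) (simp add: mult_2_right)
    have R1: "(\<Sum>k\<in>{0..n}. q * H^(n-k) * q^(2*k) * (b k + 2*t*db k))
        = (\<Sum>j\<in>{0..m}. q * H^(m-j) * q^(2*Suc j) * (b (Suc j) + 2*t*db (Suc j)))"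
      unfolding Suc sum.atLeast0_atMost_Suc_shift using b0 db0 by (simp add: o_def)
    have R2: "(\<Sum>k\<in>{0..n}. 2 * q * H^(n-k) * q^(2*k) * db (Suc k))
        = (\<Sum>j\<in>{0..m}. 2 * q * H^(Suc m - j) * q^(2*j) * db (Suc j))"
      unfolding Suc sum.atLeast0_atMost_Suc using dbn Suc by simp
    have "(\<Sum>j\<in>{0..m}. q^(2*j+1) * H^(m-j) * (b (Suc j) * q^2 - 2*(H - t*q^2)*db (Suc j)))
       = (\<Sum>j\<in>{0..m}. q * H^(m-j) * q^(2*Suc j) * (b (Suc j) + 2*t*db (Suc j))
           - 2 * q * H^(Suc m - j) * q^(2*j) * db (Suc j))"
    proof (intro sum.cong refl)
      fix j assume "j \<in> {0..m}"
      then have "Suc m - j = Suc (m - j)" by auto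
      then show "q^(2*j+1) * H^(m-j) * (b (Suc j) * q^2 - 2*(H - t*q^2)*db (Suc j))
         = q * H^(m-j) * q^(2*Suc j) * (b (Suc j) + 2*t*db (Suc j))
           - 2 * q * H^(Suc m - j) * q^(2*j) * db (Suc j)"
        by (simp add: algebra_simps power2_eq_square)
    qed
    then show ?thesis unfolding L R R1 R2 by (simp add: sum_subtractf)
  qed
qed

text \<open>Bracket of H with a single term, type 1 (with Pi factor) and type 0.\<close>
lemma B1:
  "(2 * (u * p) * (U' * p) + (q::real)^2) *
     ((\<phi> * (of_nat m * ((u * p)^2 + t * q^2) ^ (m - 1) * (2 * (u * p) * u)) * (u * p)
      + \<phi> * ((u * p)^2 + t * q^2) ^ m * u) * c)
   - (2 * (u * p) * u) *
     ((\<phi>' * ((u * p)^2 + t * q^2) ^ m * (u * p)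
      + \<phi> * (of_nat m * ((u * p)^2 + t * q^2) ^ (m - 1) * (2 * (u * p) * (U' * p) + q^2)) * (u * p)
      + \<phi> * ((u * p)^2 + t * q^2) ^ m * (U' * p)) * c)
   = c * ((u * p)^2 + t * q^2) ^ m * u * (\<phi> * q^2 - 2 * (u * p)^2 * \<phi>')"
  by (simp add: algebra_simps power2_eq_square)

lemma B0:
  "(2 * (u * p) * (U' * p) + (q::real)^2) *
     ((\<phi> * (of_nat m * ((u * p)^2 + t * q^2) ^ (m - 1) * (2 * (u * p) * u))) * c)
   - (2 * (u * p) * u) *
     ((\<phi>' * ((u * p)^2 + t * q^2) ^ m
      + \<phi> * (of_nat m * ((u * p)^2 + t * q^2) ^ (m - 1) * (2 * (u * p) * (U' * p) + q^2))) * c)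
   = - (2 * (u * p) * u) * \<phi>' * ((u * p)^2 + t * q^2) ^ m * c"
  by (simp add: algebra_simps power2_eq_square)




lemma pd0: "pd 0 f a y p q = deriv (\<lambda>t. f t y p q) a" by (simp add: pd_def)
lemma pd1: "pd 1 f a y p q = deriv (\<lambda>t. f a t p q) y" by (simp add: pd_def)
lemma pd2: "pd 2 f a y p q = deriv (\<lambda>t. f a y t q) p" by (simp add: pd_def)
lemma pd3: "pd 3 f a y p q = deriv (\<lambda>t. f a y p t) q" by (simp add: pd_def)

lemma brackets:
  assumes e: "\<forall>i\<in>{1..n}. eps i = 1 \<or> eps i = -1" and DI: "\<forall>s\<in>I. \<forall>i\<in>{1..n}. Delta eps r i s > 0"
    and oI: "open I" and tI: "t \<in> I" and xd: "xdot n eps r xi t \<noteq> 0"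
  shows "poisson (Ham n eps r xi) PyF t y p q = 0
       \<and> poisson (Ham n eps r xi) (S1fun n eps r xi) t y p q = 0
       \<and> poisson (Ham n eps r xi) (S2fun n eps r xi) t y p q = 0"
proof -
  have D: "\<forall>i\<in>{1..n}. Delta eps r i t > 0" using DI tI by auto
  define U where "U s = s / xdot n eps r xi s" for s
  obtain dx where dx: "(xdot n eps r xi has_real_derivative dx) (at t)"
    using xdot_diff[OF e DI oI tI] by blast
  define U' where "U' = (1 * xdot n eps r xi t - t * dx) / (xdot n eps r xi t * xdot n eps r xi t)"
  have dU: "(U has_real_derivative U') (at t)"
    unfolding U_def[abs_def] U'_def by (rule DERIV_divide[OF DERIV_ident dx xd])
  have HamE: "\<And>s y p q. Ham n eps r xi s y p q = (U s * p)^2 + s * q^2"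
    by (simp add: Ham_def PiF_def U_def)
  define X where "X = xdot n eps r xi t"
  have XE: "X = xdotE n eps r xi t" unfolding X_def by (rule xdot_eq[OF e D])
  have UX: "U t * X = t" unfolding U_def X_def using xd by simp
  define H where "H = (U t * p)^2 + t * q^2"
  define hs where "hs = 2 * (U t * p) * (U' * p) + q^2"
  define hp where "hp = 2 * (U t * p) * U t"
  define b where "b k = btil n eps r xi k t" for k
  define db where "db k = dbE n eps r xi k t" for k
  define c where "c k = ctil n eps r xi k t" for k
  define dc where "dc k = dcE n eps r xi k t" for k
  define A where "A k = Acoef n r k" for k
  define Gv where "Gv = (\<Sum>k\<in>{0..n}. A (n-k) * H^(n-k) * q^(2*k))"
  define Q1v where "Q1v = (\<Sum>k\<in>{1..n}. b k * H^(n-k) * (U t * p) * q^(2*k-1))"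
  define dGs where "dGs = (\<Sum>k\<in>{0..n}. (0 * H^(n-k) + A (n-k) * (of_nat (n-k) * H^(n-k-1) * hs)) * q^(2*k))"
  define dGp where "dGp = (\<Sum>k\<in>{0..n}. (A (n-k) * (of_nat (n-k) * H^(n-k-1) * hp)) * q^(2*k))"
  define dQ1s where "dQ1s = (\<Sum>k\<in>{1..n}. (db k * H^(n-k) * (U t * p)
      + b k * (of_nat (n-k) * H^(n-k-1) * hs) * (U t * p) + b k * H^(n-k) * (U' * p)) * q^(2*k-1))"
  define dQ1p where "dQ1p = (\<Sum>k\<in>{1..n}. (b k * (of_nat (n-k) * H^(n-k-1) * hp) * (U t * p)
      + b k * H^(n-k) * U t) * q^(2*k-1))"
  define dQ2s where "dQ2s = (\<Sum>k\<in>{1..n}. (dc k * H^(n-k) + c k * (of_nat (n-k) * H^(n-k-1) * hs)) * q^(2*k))"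
  define dQ2p where "dQ2p = (\<Sum>k\<in>{1..n}. (c k * (of_nat (n-k) * H^(n-k-1) * hp)) * q^(2*k))"

  have dGs_d: "((\<lambda>s. Gfun n eps r xi s y p q) has_real_derivative dGs) (at t)"
    unfolding Gfun_def HamE dGs_def H_def hs_def A_def
    by (rule DERIV_sum, rule T0s[OF dU DERIV_const])
  have dQ1s_d: "((\<lambda>s. Q1fun n eps r xi s y p q) has_real_derivative dQ1s) (at t)"
  proof -
    have eq: "(\<lambda>s. Q1fun n eps r xi s y p q) = (\<lambda>s. \<Sum>k\<in>{1..n}.
        btil n eps r xi k s * ((U s * p)^2 + s * q^2)^(n-k) * (U s * p) * q^(2*k-1))"
      by (simp add: Q1fun_def HamE PiF_def U_def)
    show ?thesis unfolding eq dQ1s_def H_def hs_def b_def db_def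
      by (rule DERIV_sum, rule T1s[OF dU btil_deriv[OF e D]])
  qed
  have dQ2s_d: "((\<lambda>s. Q2fun n eps r xi s y p q) has_real_derivative dQ2s) (at t)"
    unfolding Q2fun_def HamE dQ2s_def H_def hs_def c_def dc_def
    by (rule DERIV_sum, rule T0s[OF dU ctil_deriv[OF e D]])
  have dGp_d: "((\<lambda>p'. Gfun n eps r xi t y p' q) has_real_derivative dGp) (at p)"
    unfolding Gfun_def HamE dGp_def H_def hp_def A_def
    by (rule DERIV_sum, rule T0p)
  have dQ1p_d: "((\<lambda>p'. Q1fun n eps r xi t y p' q) has_real_derivative dQ1p) (at p)"
  proof -
    have eq: "(\<lambda>p'. Q1fun n eps r xi t y p' q) = (\<lambda>p'. \<Sum>k\<in>{1..n}.
        btil n eps r xi k t * ((U t * p')^2 + t * q^2)^(n-k) * (U t * p') * q^(2*k-1))"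
      by (simp add: Q1fun_def HamE PiF_def U_def)
    show ?thesis unfolding eq dQ1p_def H_def hp_def b_def
      by (rule DERIV_sum, rule T1p)
  qed
  have dQ2p_d: "((\<lambda>p'. Q2fun n eps r xi t y p' q) has_real_derivative dQ2p) (at p)"
    unfolding Q2fun_def HamE dQ2p_def H_def hp_def c_def
    by (rule DERIV_sum, rule T0p)
  have Gval: "\<And>z. Gfun n eps r xi t z p q = Gv"
    unfolding Gfun_def HamE Gv_def H_def A_def ..
  have Q1val: "\<And>z. Q1fun n eps r xi t z p q = Q1v"
    unfolding Q1fun_def HamE Q1v_def H_def b_def by (simp add: PiF_def U_def)
  have pH0: "pd 0 (Ham n eps r xi) t y p q = hs"
    unfolding pd0 HamE hs_def
    by (rule DERIV_imp_deriv) (rule derivative_eq_intros dU refl | simp)+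
  have pH1: "pd 1 (Ham n eps r xi) t y p q = 0"
    unfolding pd1 HamE by simp
  have pH2: "pd 2 (Ham n eps r xi) t y p q = hp"
    unfolding pd2 HamE hp_def
    by (rule DERIV_imp_deriv) (rule derivative_eq_intros refl | simp add: power2_eq_square)+
  have pH3: "pd 3 (Ham n eps r xi) t y p q = 2 * t * q"
    unfolding pd3 HamE
    by (rule DERIV_imp_deriv) (rule derivative_eq_intros refl | simp add: power2_eq_square)+
  have pP: "pd 0 PyF t y p q = 0" "pd 1 PyF t y p q = 0" "pd 2 PyF t y p q = 0" "pd 3 PyF t y p q = 1"
    unfolding pd0 pd1 pd2 pd3 PyF_def by simp_all
  have pS1_0: "pd 0 (S1fun n eps r xi) t y p q = dQ1s + y * dGs"
    unfolding pd0 S1fun_def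
    by (rule DERIV_imp_deriv, rule DERIV_add[OF dQ1s_d DERIV_cmult[OF dGs_d]])
  have pS1_2: "pd 2 (S1fun n eps r xi) t y p q = dQ1p + y * dGp"
    unfolding pd2 S1fun_def
    by (rule DERIV_imp_deriv, rule DERIV_add[OF dQ1p_d DERIV_cmult[OF dGp_d]])
  have pS1_1: "pd 1 (S1fun n eps r xi) t y p q = Gv"
    unfolding pd1 S1fun_def Gval Q1val
    by (rule DERIV_imp_deriv) (rule derivative_eq_intros refl | simp)+
  have pS2_0: "pd 0 (S2fun n eps r xi) t y p q = dQ2s + y * dQ1s + y\<^sup>2 / 2 * dGs"
    unfolding pd0 S2fun_def
    by (rule DERIV_imp_deriv, rule DERIV_add[OF DERIV_add[OF dQ2s_d DERIV_cmult[OF dQ1s_d]] DERIV_cmult[OF dGs_d]])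
  have pS2_2: "pd 2 (S2fun n eps r xi) t y p q = dQ2p + y * dQ1p + y\<^sup>2 / 2 * dGp"
    unfolding pd2 S2fun_def
    by (rule DERIV_imp_deriv, rule DERIV_add[OF DERIV_add[OF dQ2p_d DERIV_cmult[OF dQ1p_d]] DERIV_cmult[OF dGp_d]])
  define Q2v where "Q2v = Q2fun n eps r xi t y p q"
  have Q2c: "\<And>z. Q2fun n eps r xi t z p q = Q2v"
    unfolding Q2v_def by (simp add: Q2fun_def Ham_def PiF_def)
  have pS2_1: "pd 1 (S2fun n eps r xi) t y p q = Q1v + y * Gv"
    unfolding pd1 S2fun_def Gval Q1val Q2c
    by (rule DERIV_imp_deriv) (rule derivative_eq_intros refl | simp add: power2_eq_square)+
  have GB: "hs * dGp - hp * dGs = 0"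
  proof -
    have "hs * dGp = hp * dGs" unfolding dGp_def dGs_def sum_distrib_left
      by (intro sum.cong refl) (simp add: algebra_simps)
    then show ?thesis by simp
  qed
  have Q1B: "hs * dQ1p - hp * dQ1s = 2 * t * q * Gv"
  proof -
    have "hs * dQ1p - hp * dQ1s = (\<Sum>k\<in>{1..n}. hs * ((b k * (of_nat (n-k) * H^(n-k-1) * hp) * (U t * p)
      + b k * H^(n-k) * U t) * q^(2*k-1)) - hp * ((db k * H^(n-k) * (U t * p)
      + b k * (of_nat (n-k) * H^(n-k-1) * hs) * (U t * p) + b k * H^(n-k) * (U' * p)) * q^(2*k-1)))"
      unfolding dQ1p_def dQ1s_def by (simp add: sum_distrib_left sum_subtractf)
    also have "\<dots> = (\<Sum>k\<in>{1..n}. q^(2*k-1) * H^(n-k) * (b k * q^2 - 2*(H - t*q^2)*db k)) * U t"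
      unfolding sum_distrib_right
    proof (intro sum.cong refl)
      fix k
      have sq: "(U t * p)^2 = H - t*q^2" unfolding H_def by simp
      have B: "hs * ((b k * (of_nat (n-k) * H^(n-k-1) * hp) * (U t * p)
      + b k * H^(n-k) * U t) * q^(2*k-1)) - hp * ((db k * H^(n-k) * (U t * p)
      + b k * (of_nat (n-k) * H^(n-k-1) * hs) * (U t * p) + b k * H^(n-k) * (U' * p)) * q^(2*k-1))
        = q^(2*k-1) * H^(n-k) * U t * (b k * q^2 - 2 * (U t * p)^2 * db k)"
        using B1[of "U t" p U' q "b k" "n-k" t "q^(2*k-1)" "db k"]
        unfolding hs_def hp_def H_def .
      show "hs * ((b k * (of_nat (n-k) * H^(n-k-1) * hp) * (U t * p)
      + b k * H^(n-k) * U t) * q^(2*k-1)) - hp * ((db k * H^(n-k) * (U t * p)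
      + b k * (of_nat (n-k) * H^(n-k-1) * hs) * (U t * p) + b k * H^(n-k) * (U' * p)) * q^(2*k-1))
        = q^(2*k-1) * H^(n-k) * (b k * q^2 - 2*(H - t*q^2)*db k) * U t"
        unfolding B sq by (simp add: algebra_simps)
    qed
    also have "(\<Sum>k\<in>{1..n}. q^(2*k-1) * H^(n-k) * (b k * q^2 - 2*(H - t*q^2)*db k))
        = 2 * X * q * Gv"
      unfolding Gv_def
    proof (rule SumQ1)
      show "b 0 = 0" unfolding b_def btil_def esym_def by simp
      show "db 0 = 0" unfolding db_def dbE_def esym_def by simp
      show "db (Suc n) = 0" unfolding db_def dbE_def
        using sig1_top[of _ n r] by (simp add: sum.neutral)
      show "\<And>j. j \<le> n \<Longrightarrow> b j + 2*t*db j - 2*db (Suc j) = 2*X*A (n-j)"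
        unfolding b_def db_def A_def XE using Q1coef[OF e D] by simp
    qed
    finally show ?thesis using UX by (simp add: algebra_simps)
  qed
  have Q2B: "hs * dQ2p - hp * dQ2s = 2 * t * q * Q1v"
  proof -
    have "hs * dQ2p - hp * dQ2s = (\<Sum>k\<in>{1..n}. hs * ((c k * (of_nat (n-k) * H^(n-k-1) * hp)) * q^(2*k))
       - hp * ((dc k * H^(n-k) + c k * (of_nat (n-k) * H^(n-k-1) * hs)) * q^(2*k)))"
      unfolding dQ2p_def dQ2s_def by (simp add: sum_distrib_left sum_subtractf)
    also have "\<dots> = (\<Sum>k\<in>{1..n}. 2 * t * q * (b k * H^(n-k) * (U t * p) * q^(2*k-1)))"
    proof (intro sum.cong refl)
      fix k assume k: "k \<in> {1..n}"
      then have "2*k = Suc (2*k - 1)" by simp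
      then have qk: "q^(2*k) = q * q^(2*k-1)" by (metis power_Suc)
      have dck: "dc k = - X * b k" unfolding dc_def b_def XE by (rule Q2coef[OF e D])
      show "hs * ((c k * (of_nat (n-k) * H^(n-k-1) * hp)) * q^(2*k))
       - hp * ((dc k * H^(n-k) + c k * (of_nat (n-k) * H^(n-k-1) * hs)) * q^(2*k))
       = 2 * t * q * (b k * H^(n-k) * (U t * p) * q^(2*k-1))"
      proof -
        have hpX: "hp * X = 2 * (U t * p) * t"
        proof -
          have "hp * X = 2 * (U t * p) * (U t * X)" unfolding hp_def by (simp add: algebra_simps)
          then show ?thesis using UX by simp
        qed
        have "hs * ((c k * (of_nat (n-k) * H^(n-k-1) * hp)) * q^(2*k))
         - hp * ((dc k * H^(n-k) + c k * (of_nat (n-k) * H^(n-k-1) * hs)) * q^(2*k))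
          = (hp * X) * (b k * H^(n-k) * q^(2*k))"
          unfolding dck by (simp add: algebra_simps)
        also have "\<dots> = 2 * t * q * (b k * H^(n-k) * (U t * p) * q^(2*k-1))"
          unfolding hpX qk by (simp add: algebra_simps)
        finally show ?thesis .
      qed
    qed
    finally show ?thesis unfolding Q1v_def by (simp add: sum_distrib_left)
  qed
  have B_P: "poisson (Ham n eps r xi) PyF t y p q = 0"
    unfolding poisson_def pH0 pH1 pH2 pH3 pP by simp
  have B_1: "poisson (Ham n eps r xi) (S1fun n eps r xi) t y p q = 0"
  proof -
    have "poisson (Ham n eps r xi) (S1fun n eps r xi) t y p q
       = (hs * dQ1p - hp * dQ1s) + y * (hs * dGp - hp * dGs) - 2 * t * q * Gv"
      unfolding poisson_def pH0 pH1 pH2 pH3 pS1_0 pS1_1 pS1_2 by (simp add: algebra_simps)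
    then show ?thesis unfolding Q1B GB by simp
  qed
  have B_2: "poisson (Ham n eps r xi) (S2fun n eps r xi) t y p q = 0"
  proof -
    have "poisson (Ham n eps r xi) (S2fun n eps r xi) t y p q
       = (hs * dQ2p - hp * dQ2s) + y * (hs * dQ1p - hp * dQ1s) + y\<^sup>2 / 2 * (hs * dGp - hp * dGs)
         - 2 * t * q * (Q1v + y * Gv)"
      unfolding poisson_def pH0 pH1 pH2 pH3 pS2_0 pS2_1 pS2_2 by (simp add: field_simps)
    then show ?thesis unfolding Q1B Q2B GB by (simp add: algebra_simps)
  qed
  show ?thesis using B_P B_1 B_2 by blast
qed




lemma pH2_gen: "pd 2 (Ham n eps r xi) t y p q = 2 * (t / xdot n eps r xi t * p) * (t / xdot n eps r xi t)"
  unfolding pd2 Ham_def PiF_def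
  by (rule DERIV_imp_deriv) (rule derivative_eq_intros refl | simp add: power2_eq_square)+

lemma pH1_gen: "pd 1 (Ham n eps r xi) t y p q = 0"
  unfolding pd1 Ham_def PiF_def by simp

lemma pS1_1_gen: "pd 1 (S1fun n eps r xi) t y p q = Gfun n eps r xi t y p q"
proof -
  have g: "\<And>z. Gfun n eps r xi t z p q = Gfun n eps r xi t y p q"
    by (simp add: Gfun_def Ham_def PiF_def)
  define Gv where "Gv = Gfun n eps r xi t y p q"
  have q: "\<And>z. Q1fun n eps r xi t z p q = Q1fun n eps r xi t y p q"
    by (simp add: Q1fun_def Ham_def PiF_def)
  define Qv where "Qv = Q1fun n eps r xi t y p q"
  have "pd 1 (S1fun n eps r xi) t y p q = Gv"
    unfolding pd1 S1fun_def g[unfolded Gv_def[symmetric]] q[unfolded Qv_def[symmetric]]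
    by (rule DERIV_imp_deriv) (rule derivative_eq_intros refl | simp)+
  then show ?thesis unfolding Gv_def .
qed

lemma pS2_1_gen: "pd 1 (S2fun n eps r xi) t y p q = Q1fun n eps r xi t y p q + y * Gfun n eps r xi t y p q"
proof -
  have g: "\<And>z. Gfun n eps r xi t z p q = Gfun n eps r xi t y p q"
    by (simp add: Gfun_def Ham_def PiF_def)
  define Gv where "Gv = Gfun n eps r xi t y p q"
  have q: "\<And>z. Q1fun n eps r xi t z p q = Q1fun n eps r xi t y p q"
    by (simp add: Q1fun_def Ham_def PiF_def)
  define Qv where "Qv = Q1fun n eps r xi t y p q"
  have q2: "\<And>z. Q2fun n eps r xi t z p q = Q2fun n eps r xi t y p q"
    by (simp add: Q2fun_def Ham_def PiF_def)
  define Q2v where "Q2v = Q2fun n eps r xi t y p q"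
  have "pd 1 (S2fun n eps r xi) t y p q = Qv + y * Gv"
    unfolding pd1 S2fun_def g[unfolded Gv_def[symmetric]] q[unfolded Qv_def[symmetric]]
      q2[unfolded Q2v_def[symmetric]]
    by (rule DERIV_imp_deriv) (rule derivative_eq_intros refl | simp add: power2_eq_square)+
  then show ?thesis unfolding Gv_def Qv_def .
qed

lemma pP_gen: "pd 1 PyF t y p q = 0" "pd 2 PyF t y p q = 0" "pd 3 PyF t y p q = 1"
  unfolding pd1 pd2 pd3 PyF_def by simp_all

lemma Gfun_q0:
  assumes "n \<ge> 1"
  shows "Gfun n eps r xi t y p 0 = (Ham n eps r xi t y p 0) ^ n"
proof -
  obtain m where m: "n = Suc m" using assms by (cases n) auto
  show ?thesis unfolding Gfun_def m sum.atLeast0_atMost_Suc_shift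
    using Acoef_top[of "Suc m" r] by simp
qed

lemma Q1fun_q0: "Q1fun n eps r xi t y p 0 = 0"
  unfolding Q1fun_def by (rule sum.neutral) auto

lemma indep:
  assumes n: "n \<ge> 1" and t: "t > 0" and xd: "xdot n eps r xi t \<noteq> 0"
  shows "wedge3_nonzero (Ham n eps r xi) PyF (S1fun n eps r xi) t 1 1 0"
    "wedge3_nonzero (Ham n eps r xi) PyF (S2fun n eps r xi) t 1 1 0"
proof -
  define u where "u = t / xdot n eps r xi t"
  have u0: "u \<noteq> 0" unfolding u_def using t xd by simp
  have H: "Ham n eps r xi t 1 1 0 = u^2" unfolding Ham_def PiF_def u_def by simp
  have G: "Gfun n eps r xi t 1 1 0 = (u^2)^n" using Gfun_q0[OF n] H by simp
  have c1: "wedge3_comp (Ham n eps r xi) PyF (S1fun n eps r xi) 1 2 3 t 1 1 0 = 2 * u * u * (u^2)^n"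
    unfolding wedge3_comp_def Let_def pH1_gen pP_gen pH2_gen pS1_1_gen G u_def[symmetric] by simp
  have c2: "wedge3_comp (Ham n eps r xi) PyF (S2fun n eps r xi) 1 2 3 t 1 1 0 = 2 * u * u * (u^2)^n"
    unfolding wedge3_comp_def Let_def pH1_gen pP_gen pH2_gen pS2_1_gen G Q1fun_q0 u_def[symmetric] by simp
  have nz: "2 * u * u * (u^2)^n \<noteq> 0" using u0 by simp
  show "wedge3_nonzero (Ham n eps r xi) PyF (S1fun n eps r xi) t 1 1 0"
    unfolding wedge3_nonzero_def using c1 nz by (intro exI[of _ 1] exI[of _ 2] exI[of _ 3]) simp
  show "wedge3_nonzero (Ham n eps r xi) PyF (S2fun n eps r xi) t 1 1 0"
    unfolding wedge3_nonzero_def using c2 nz by (intro exI[of _ 1] exI[of _ 2] exI[of _ 3]) simp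
qed

theorem theorem1:
  fixes n :: nat and r eps xi :: "nat \<Rightarrow> real" and I :: "real set"
  assumes "n \<ge> 2"
    and "inj_on r {1..n}"
    and "\<forall>i\<in>{1..n}. eps i = 1 \<or> eps i = -1"
    and "open I" and "is_interval I" and "I \<noteq> {}" and "I \<subseteq> {0<..}"
    and "\<forall>t\<in>I. \<forall>i\<in>{1..n}. Delta eps r i t > 0"
    and "\<forall>t\<in>I. xdot n eps r xi t \<noteq> 0"
  shows "(\<forall>t\<in>I. \<forall>y p q.
            poisson (Ham n eps r xi) PyF t y p q = 0
          \<and> poisson (Ham n eps r xi) (S1fun n eps r xi) t y p q = 0
          \<and> poisson (Ham n eps r xi) (S2fun n eps r xi) t y p q = 0)
       \<and> (\<exists>t\<in>I. \<exists>y p q. wedge3_nonzero (Ham n eps r xi) PyF (S1fun n eps r xi) t y p q)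
       \<and> (\<exists>t\<in>I. \<exists>y p q. wedge3_nonzero (Ham n eps r xi) PyF (S2fun n eps r xi) t y p q)"
proof -
  have A: "\<forall>t\<in>I. \<forall>y p q.
            poisson (Ham n eps r xi) PyF t y p q = 0
          \<and> poisson (Ham n eps r xi) (S1fun n eps r xi) t y p q = 0
          \<and> poisson (Ham n eps r xi) (S2fun n eps r xi) t y p q = 0"
    using brackets[OF assms(3) assms(8) assms(4)] assms(9) by blast
  obtain t where tI: "t \<in> I" using assms(6) by blast
  have tpos: "t > 0" using tI assms(7) by auto
  have n1: "n \<ge> 1" using assms(1) by simp
  note ind = indep[OF n1 tpos assms(9)[rule_format, OF tI]]
  show ?thesis using A ind tI by blast
qed


end
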